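(* In an $m$-player layered finite-horizon Markov game, let $\pi^j_t,\pi^j_{t+1}$ ($j\in[m]$) be arbitrary policies of the players in episodes $t$ and $t+1$. Then for any player $i\in[m]$ and any policy $\mu$ of player $i$, $$\big\|q^\mu_{P^i_{t+1}}-q^\mu_{P^i_t}\big\|_\infty\le H^2\sum_{j\ne i}\|\pi^j_{t+1}-\pi^j_t\|_{\infty,1}.$$
   Context: Markov game: horizon $H$; states $\mathcal S=\bigcup_{h=1}^{H+1}\mathcal S_h$ with $\mathcal S_1=\{s_1\}$; players $i\in[m]$ with finite action sets $\mathcal A_i$; for $s\in\mathcal S_h$ and joint action $\mathbf a$, $P(\cdot\mid s,\mathbf a)$ is a distribution over $\mathcal S_{h+1}$. Policies assign $\pi^j(\cdot\mid s)\in\Delta_{\mathcal A_j}$, players act independently. The induced transition kernel of player $i$ in episode $t$ is $P^i_t(\cdot\mid s,a)=\mathbb E_{\mathbf a\sim\boldsymbol\pi_t(\cdot\mid s)}[P(\cdot\mid s,\mathbf a)\mid a^i=a]$, where $\boldsymbol\pi_t(\cdot\mid s)$ is the product of the $\pi^j_t(\cdot\mid s)$. For a single-agent kernel $P'$ and policy $\mu$, $q^\mu_{P'}(s)=\Pr(s_h=s\mid P',\mu,s_1)$ for $s\in\mathcal S_h$, viewed as a vector indexed by $\mathcal S$. $\|\pi-\tilde\pi\|_{\infty,1}=\max_s\|\pi(\cdot\mid s)-\tilde\pi(\cdot\mid s)\|_1$. *)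

theory Defs
  imports "HOL-Library.FuncSet" Complex_Main
begin

(* Players are indexed by 0..<m. A joint action is an element of PiE {..<m} A,
   where A j is the (finite) action set of player j. All actions live in one type 'a. *)

definition joint_actions :: "nat \<Rightarrow> (nat \<Rightarrow> 'a set) \<Rightarrow> (nat \<Rightarrow> 'a) set" where
  "joint_actions m A = PiE {..<m} A"

definition layered_markov_game ::
  "nat \<Rightarrow> 's set \<Rightarrow> ('s \<Rightarrow> nat) \<Rightarrow> 's \<Rightarrow> nat \<Rightarrow> (nat \<Rightarrow> 'a set)
   \<Rightarrow> ('s \<Rightarrow> (nat \<Rightarrow> 'a) \<Rightarrow> 's \<Rightarrow> real) \<Rightarrow> bool" where
  "layered_markov_game H S layer s1 m A P \<longleftrightarrow>
     finite S \<and> s1 \<in> S \<and>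
     (\<forall>s\<in>S. 1 \<le> layer s \<and> layer s \<le> Suc H) \<and>
     {s\<in>S. layer s = 1} = {s1} \<and>
     (\<forall>j<m. finite (A j) \<and> A j \<noteq> {}) \<and>
     (\<forall>s\<in>S. layer s \<le> H \<longrightarrow> (\<forall>b\<in>joint_actions m A.
        (\<forall>s'. 0 \<le> P s b s') \<and>
        (\<forall>s'. P s b s' \<noteq> 0 \<longrightarrow> s' \<in> S \<and> layer s' = Suc (layer s)) \<and>
        (\<Sum>s'\<in>S. P s b s') = 1))"

definition is_policy :: "'s set \<Rightarrow> 'a set \<Rightarrow> ('s \<Rightarrow> 'a \<Rightarrow> real) \<Rightarrow> bool" where
  "is_policy S Aj pol \<longleftrightarrow> (\<forall>s\<in>S. (\<forall>a\<in>Aj. 0 \<le> pol s a) \<and> (\<Sum>a\<in>Aj. pol s a) = 1)"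

(* Induced kernel of player i:
   P^i(s'|s,a) = E_{b ~ prod_j pol j (.|s)} [ P(s'|s,b) | b i = a ]
              = sum over joint actions b with b i = a of (prod_{j\<noteq>i} pol j s (b j)) * P s b s'
   (the players act independently). *)
definition induced_kernel ::
  "nat \<Rightarrow> (nat \<Rightarrow> 'a set) \<Rightarrow> ('s \<Rightarrow> (nat \<Rightarrow> 'a) \<Rightarrow> 's \<Rightarrow> real)
   \<Rightarrow> (nat \<Rightarrow> 's \<Rightarrow> 'a \<Rightarrow> real) \<Rightarrow> nat \<Rightarrow> 's \<Rightarrow> 'a \<Rightarrow> 's \<Rightarrow> real" where
  "induced_kernel m A P pol i s a s' =
     (\<Sum>b\<in>{b\<in>joint_actions m A. b i = a}. (\<Prod>j\<in>{..<m}-{i}. pol j s (b j)) * P s b s')"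

(* occ ... h s = Pr(s_{h+1} = s | P', mu, s1)  (layers are 1-based, h is 0-based) *)
fun occ :: "'s set \<Rightarrow> ('s \<Rightarrow> nat) \<Rightarrow> 's \<Rightarrow> 'a set \<Rightarrow> ('s \<Rightarrow> 'a \<Rightarrow> 's \<Rightarrow> real)
            \<Rightarrow> ('s \<Rightarrow> 'a \<Rightarrow> real) \<Rightarrow> nat \<Rightarrow> 's \<Rightarrow> real" where
  "occ S layer s1 Ai Pk mu 0 s = (if s = s1 then 1 else 0)"
| "occ S layer s1 Ai Pk mu (Suc h) s' =
     (\<Sum>s\<in>{s\<in>S. layer s = Suc h}. \<Sum>a\<in>Ai. occ S layer s1 Ai Pk mu h s * mu s a * Pk s a s')"

definition occupancy :: "'s set \<Rightarrow> ('s \<Rightarrow> nat) \<Rightarrow> 's \<Rightarrow> 'a set \<Rightarrow> ('s \<Rightarrow> 'a \<Rightarrow> 's \<Rightarrow> real)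
            \<Rightarrow> ('s \<Rightarrow> 'a \<Rightarrow> real) \<Rightarrow> 's \<Rightarrow> real" where
  "occupancy S layer s1 Ai Pk mu s = occ S layer s1 Ai Pk mu (layer s - 1) s"

definition sup_dist :: "'s set \<Rightarrow> ('s \<Rightarrow> real) \<Rightarrow> ('s \<Rightarrow> real) \<Rightarrow> real" where
  "sup_dist S f g = Max ((\<lambda>s. \<bar>f s - g s\<bar>) ` S)"

definition policy_dist :: "'s set \<Rightarrow> 'a set \<Rightarrow> ('s \<Rightarrow> 'a \<Rightarrow> real) \<Rightarrow> ('s \<Rightarrow> 'a \<Rightarrow> real) \<Rightarrow> real" where
  "policy_dist S Aj pol pol' = Max ((\<lambda>s. \<Sum>a\<in>Aj. \<bar>pol s a - pol' s a\<bar>) ` S)"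

end

theory Submission
  imports Defs
begin

lemma sum_PiE_insert:
  assumes "finite J" "k \<notin> J"
  shows "(\<Sum>g\<in>PiE (insert k J) B. F g) = (\<Sum>y\<in>B k. \<Sum>g\<in>PiE J B. F (g(k:=y)))"
proof -
  have "(\<Sum>g\<in>PiE (insert k J) B. F g) = (\<Sum>(y,g)\<in>B k \<times> PiE J B. F (g(k:=y)))"
    using assms
    by (intro sum.reindex_bij_witness[of _ "\<lambda>(y,g). g(k := y)" "\<lambda>g. (g k, g(k := undefined))"])
       (auto simp: PiE_def extensional_def)
  also have "\<dots> = (\<Sum>y\<in>B k. \<Sum>g\<in>PiE J B. F (g(k:=y)))"
    by (rule sum.cartesian_product[symmetric])
  finally show ?thesis .
qed

lemma prod_diff_PiE:
  fixes p q :: "nat \<Rightarrow> 'a \<Rightarrow> real"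
  assumes "finite J" "\<And>j. j\<in>J \<Longrightarrow> finite (B j)"
   "\<And>j x. j\<in>J \<Longrightarrow> x\<in>B j \<Longrightarrow> 0 \<le> p j x" "\<And>j x. j\<in>J \<Longrightarrow> x\<in>B j \<Longrightarrow> 0 \<le> q j x"
   "\<And>j. j\<in>J \<Longrightarrow> sum (p j) (B j) = 1" "\<And>j. j\<in>J \<Longrightarrow> sum (q j) (B j) = 1"
  shows "(\<Sum>g\<in>PiE J B. \<bar>(\<Prod>j\<in>J. p j (g j)) - (\<Prod>j\<in>J. q j (g j))\<bar>)
          \<le> (\<Sum>j\<in>J. \<Sum>x\<in>B j. \<bar>p j x - q j x\<bar>)"
  using assms
proof (induction J rule: finite_induct)
  case empty then show ?case by simp
next
  case (insert k J)
  define Pg where "Pg g = (\<Prod>j\<in>J. p j (g j))" for g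
  define Qg where "Qg g = (\<Prod>j\<in>J. q j (g j))" for g
  have fin: "finite (PiE J B)" using insert by (intro finite_PiE) auto
  have Pnn: "0 \<le> Pg g" if "g \<in> PiE J B" for g
    using that insert.prems unfolding Pg_def by (intro prod_nonneg) (auto simp: PiE_def Pi_def)
  have Psum: "(\<Sum>g\<in>PiE J B. Pg g) = 1"
  proof -
    have "(\<Sum>g\<in>PiE J B. Pg g) = (\<Prod>j\<in>J. \<Sum>x\<in>B j. p j x)"
      unfolding Pg_def using insert by (subst prod_sum_PiE) auto
    also have "\<dots> = 1" using insert.prems by (intro prod.neutral) auto
    finally show ?thesis .
  qed
  have IH: "(\<Sum>g\<in>PiE J B. \<bar>Pg g - Qg g\<bar>) \<le> (\<Sum>j\<in>J. \<Sum>x\<in>B j. \<bar>p j x - q j x\<bar>)"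
    unfolding Pg_def Qg_def using insert by (intro insert.IH) auto
  have upd: "(\<Prod>j\<in>insert k J. f j ((g(k:=y)) j)) = f k y * (\<Prod>j\<in>J. f j (g j))" for f :: "nat \<Rightarrow> 'a \<Rightarrow> real" and g y
  proof -
    have "(\<Prod>j\<in>J. f j ((g(k:=y)) j)) = (\<Prod>j\<in>J. f j (g j))"
      using insert.hyps by (intro prod.cong) auto
    then show ?thesis using insert.hyps by simp
  qed
  have "(\<Sum>g\<in>PiE (insert k J) B. \<bar>(\<Prod>j\<in>insert k J. p j (g j)) - (\<Prod>j\<in>insert k J. q j (g j))\<bar>)
      = (\<Sum>y\<in>B k. \<Sum>g\<in>PiE J B. \<bar>p k y * Pg g - q k y * Qg g\<bar>)"
    unfolding sum_PiE_insert[OF insert.hyps] upd[of p] upd[of q] Pg_def Qg_def ..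
  also have "\<dots> \<le> (\<Sum>y\<in>B k. \<Sum>g\<in>PiE J B. \<bar>p k y - q k y\<bar> * Pg g + q k y * \<bar>Pg g - Qg g\<bar>)"
  proof (intro sum_mono)
    fix y g assume y: "y \<in> B k" and g: "g \<in> PiE J B"
    have "p k y * Pg g - q k y * Qg g = (p k y - q k y) * Pg g + q k y * (Pg g - Qg g)"
      by (simp add: algebra_simps)
    also have "\<bar>\<dots>\<bar> \<le> \<bar>p k y - q k y\<bar> * Pg g + q k y * \<bar>Pg g - Qg g\<bar>"
    proof -
      have "0 \<le> q k y" using insert.prems(3)[of k y] y by simp
      then show ?thesis using Pnn[OF g] abs_triangle_ineq[of "(p k y - q k y) * Pg g" "q k y * (Pg g - Qg g)"]
        by (simp add: abs_mult)
    qed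
    finally show "\<bar>p k y * Pg g - q k y * Qg g\<bar> \<le> \<bar>p k y - q k y\<bar> * Pg g + q k y * \<bar>Pg g - Qg g\<bar>" .
  qed
  also have "\<dots> = (\<Sum>y\<in>B k. \<bar>p k y - q k y\<bar>) * (\<Sum>g\<in>PiE J B. Pg g)
                 + (\<Sum>y\<in>B k. q k y) * (\<Sum>g\<in>PiE J B. \<bar>Pg g - Qg g\<bar>)"
    by (simp add: sum.distrib sum_distrib_left sum_distrib_right sum.swap[of _ "B k"])
  also have "\<dots> = (\<Sum>y\<in>B k. \<bar>p k y - q k y\<bar>) + (\<Sum>g\<in>PiE J B. \<bar>Pg g - Qg g\<bar>)"
    using Psum insert.prems(5)[of k] by simp
  also have "\<dots> \<le> (\<Sum>j\<in>insert k J. \<Sum>x\<in>B j. \<bar>p j x - q j x\<bar>)"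
    using IH insert.hyps by simp
  finally show ?case .
qed


lemma kernel_alt:
  assumes "i < m" "a \<in> A i"
  shows "induced_kernel m A P pol i s a s' =
    (\<Sum>g\<in>PiE ({..<m}-{i}) A. (\<Prod>j\<in>{..<m}-{i}. pol j s (g j)) * P s (g(i:=a)) s')"
  unfolding induced_kernel_def joint_actions_def
proof (rule sum.reindex_bij_witness[of _ "\<lambda>g. g(i:=a)" "\<lambda>b. b(i:=undefined)"])
  fix b assume b: "b \<in> {b \<in> PiE {..<m} A. b i = a}"
  then show "(b(i:=undefined))(i:=a) = b" by auto
  show "b(i:=undefined) \<in> PiE ({..<m}-{i}) A" using b by (auto simp: PiE_def extensional_def)
  have "(\<Prod>j\<in>{..<m}-{i}. pol j s ((b(i:=undefined)) j)) = (\<Prod>j\<in>{..<m}-{i}. pol j s (b j))"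
    by (intro prod.cong) auto
  then show "(\<Prod>j\<in>{..<m}-{i}. pol j s ((b(i:=undefined)) j)) * P s ((b(i:=undefined))(i:=a)) s' =
        (\<Prod>j\<in>{..<m}-{i}. pol j s (b j)) * P s b s'" using b by auto
next
  fix g assume g: "g \<in> PiE ({..<m}-{i}) A"
  then show "(g(i:=a))(i:=undefined) = g" by (auto simp: PiE_def extensional_def)
  show "g(i:=a) \<in> {b \<in> PiE {..<m} A. b i = a}" using g assms by (auto simp: PiE_def extensional_def)
qed

lemma upd_joint:
  assumes "i < m" "a \<in> A i" "g \<in> PiE ({..<m}-{i}) A"
  shows "g(i:=a) \<in> joint_actions m A"
proof -
  have "g(i:=a) \<in> PiE (insert i ({..<m}-{i})) A" by (rule PiE_fun_upd[OF assms(2,3)])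
  moreover have "insert i ({..<m}-{i}) = {..<m}" using assms by auto
  ultimately show ?thesis unfolding joint_actions_def by simp
qed

lemma weight_sum:
  assumes game: "layered_markov_game H S layer s1 m A P"
    and pol: "\<forall>j<m. is_policy S (A j) (pol j)" and s: "s \<in> S"
  shows "(\<Sum>g\<in>PiE ({..<m}-{i}) A. (\<Prod>j\<in>{..<m}-{i}. pol j s (g j))) = 1"
proof -
  have "(\<Sum>g\<in>PiE ({..<m}-{i}) A. (\<Prod>j\<in>{..<m}-{i}. pol j s (g j)))
      = (\<Prod>j\<in>{..<m}-{i}. \<Sum>x\<in>A j. pol j s x)"
    using game by (subst prod_sum_PiE) (auto simp: layered_markov_game_def)
  also have "\<dots> = 1" using pol s by (intro prod.neutral) (auto simp: is_policy_def)
  finally show ?thesis .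
qed

lemma kernel_facts:
  assumes game: "layered_markov_game H S layer s1 m A P"
    and pol: "\<forall>j<m. is_policy S (A j) (pol j)" and i: "i < m"
    and s: "s \<in> S" "layer s \<le> H" and a: "a \<in> A i"
  shows "(\<Sum>s'\<in>S. induced_kernel m A P pol i s a s') = 1"
    and "0 \<le> induced_kernel m A P pol i s a s'"
proof -
  let ?J = "{..<m}-{i}"
  have Pf: "(\<forall>s'. 0 \<le> P s b s') \<and> (\<Sum>s'\<in>S. P s b s') = 1" if "b \<in> joint_actions m A" for b
    using game s that unfolding layered_markov_game_def by blast
  have wnn: "0 \<le> (\<Prod>j\<in>?J. pol j s (g j))" if "g \<in> PiE ?J A" for g
    using pol s that by (intro prod_nonneg) (auto simp: is_policy_def PiE_def Pi_def)
  have "(\<Sum>s'\<in>S. induced_kernel m A P pol i s a s')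
     = (\<Sum>g\<in>PiE ?J A. (\<Prod>j\<in>?J. pol j s (g j)) * (\<Sum>s'\<in>S. P s (g(i:=a)) s'))"
    unfolding kernel_alt[of i m a A, OF i a] by (simp add: sum.swap[of _ S] sum_distrib_left)
  also have "\<dots> = (\<Sum>g\<in>PiE ?J A. (\<Prod>j\<in>?J. pol j s (g j)))"
    using Pf upd_joint[of i m a A, OF i a] by (intro sum.cong) auto
  also have "\<dots> = 1" by (rule weight_sum[OF game pol s(1)])
  finally show "(\<Sum>s'\<in>S. induced_kernel m A P pol i s a s') = 1" .
  show "0 \<le> induced_kernel m A P pol i s a s'"
    unfolding kernel_alt[of i m a A, OF i a]
    using Pf upd_joint[of i m a A, OF i a] wnn by (intro sum_nonneg mult_nonneg_nonneg) auto
qed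

lemma kernel_diff:
  assumes game: "layered_markov_game H S layer s1 m A P"
    and pol1: "\<forall>j<m. is_policy S (A j) (pol1 j)"
    and pol0: "\<forall>j<m. is_policy S (A j) (pol0 j)" and i: "i < m"
    and s: "s \<in> S" "layer s \<le> H" and a: "a \<in> A i"
  shows "(\<Sum>s'\<in>S. \<bar>induced_kernel m A P pol1 i s a s' - induced_kernel m A P pol0 i s a s'\<bar>)
      \<le> (\<Sum>j\<in>{..<m}-{i}. policy_dist S (A j) (pol1 j) (pol0 j))"
proof -
  let ?J = "{..<m}-{i}"
  define w1 where "w1 g = (\<Prod>j\<in>?J. pol1 j s (g j))" for g
  define w0 where "w0 g = (\<Prod>j\<in>?J. pol0 j s (g j))" for g
  have Pf: "(\<forall>s'. 0 \<le> P s b s') \<and> (\<Sum>s'\<in>S. P s b s') = 1" if "b \<in> joint_actions m A" for b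
    using game s that unfolding layered_markov_game_def by blast
  have fin: "\<forall>j<m. finite (A j)" using game by (auto simp: layered_markov_game_def)
  have "(\<Sum>s'\<in>S. \<bar>induced_kernel m A P pol1 i s a s' - induced_kernel m A P pol0 i s a s'\<bar>)
      = (\<Sum>s'\<in>S. \<bar>\<Sum>g\<in>PiE ?J A. (w1 g - w0 g) * P s (g(i:=a)) s'\<bar>)"
    unfolding kernel_alt[of i m a A, OF i a] w1_def w0_def
    by (simp add: sum_subtractf left_diff_distrib)
  also have "\<dots> \<le> (\<Sum>s'\<in>S. \<Sum>g\<in>PiE ?J A. \<bar>w1 g - w0 g\<bar> * P s (g(i:=a)) s')"
  proof (intro sum_mono)
    fix s' assume "s' \<in> S"
    have "\<bar>\<Sum>g\<in>PiE ?J A. (w1 g - w0 g) * P s (g(i:=a)) s'\<bar>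
        \<le> (\<Sum>g\<in>PiE ?J A. \<bar>(w1 g - w0 g) * P s (g(i:=a)) s'\<bar>)" by (rule sum_abs)
    also have "\<dots> = (\<Sum>g\<in>PiE ?J A. \<bar>w1 g - w0 g\<bar> * P s (g(i:=a)) s')"
      using Pf upd_joint[of i m a A, OF i a] by (intro sum.cong) (auto simp: abs_mult)
    finally show "\<bar>\<Sum>g\<in>PiE ?J A. (w1 g - w0 g) * P s (g(i:=a)) s'\<bar>
        \<le> (\<Sum>g\<in>PiE ?J A. \<bar>w1 g - w0 g\<bar> * P s (g(i:=a)) s')" .
  qed
  also have "\<dots> = (\<Sum>g\<in>PiE ?J A. \<bar>w1 g - w0 g\<bar> * (\<Sum>s'\<in>S. P s (g(i:=a)) s'))"
    by (simp add: sum.swap[of _ S] sum_distrib_left)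
  also have "\<dots> = (\<Sum>g\<in>PiE ?J A. \<bar>w1 g - w0 g\<bar>)"
    using Pf upd_joint[of i m a A, OF i a] by (intro sum.cong) auto
  also have "\<dots> \<le> (\<Sum>j\<in>?J. \<Sum>x\<in>A j. \<bar>pol1 j s x - pol0 j s x\<bar>)"
    unfolding w1_def w0_def
    using pol1 pol0 s fin by (intro prod_diff_PiE) (auto simp: is_policy_def)
  also have "\<dots> \<le> (\<Sum>j\<in>?J. policy_dist S (A j) (pol1 j) (pol0 j))"
  proof (intro sum_mono)
    fix j assume "j \<in> ?J"
    have "finite S" using game by (simp add: layered_markov_game_def)
    then show "(\<Sum>x\<in>A j. \<bar>pol1 j s x - pol0 j s x\<bar>) \<le> policy_dist S (A j) (pol1 j) (pol0 j)"
      unfolding policy_dist_def using s by (intro Max_ge) auto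
  qed
  finally show ?thesis .
qed


theorem lemma21:
  fixes H m i :: nat and S :: "'s set" and layer :: "'s \<Rightarrow> nat" and s1 :: 's
    and A :: "nat \<Rightarrow> 'a set" and P :: "'s \<Rightarrow> (nat \<Rightarrow> 'a) \<Rightarrow> 's \<Rightarrow> real"
    and pi_t pi_t1 :: "nat \<Rightarrow> 's \<Rightarrow> 'a \<Rightarrow> real" and mu :: "'s \<Rightarrow> 'a \<Rightarrow> real"
  assumes game: "layered_markov_game H S layer s1 m A P"
    and pol_t: "\<forall>j<m. is_policy S (A j) (pi_t j)"
    and pol_t1: "\<forall>j<m. is_policy S (A j) (pi_t1 j)"
    and i: "i < m"
    and mu: "is_policy S (A i) mu"
  shows "sup_dist S
           (occupancy S layer s1 (A i) (induced_kernel m A P pi_t1 i) mu)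
           (occupancy S layer s1 (A i) (induced_kernel m A P pi_t i) mu)
         \<le> (real H)^2 * (\<Sum>j\<in>{..<m}-{i}. policy_dist S (A j) (pi_t1 j) (pi_t j))"
proof -
  define K1 where "K1 = induced_kernel m A P pi_t1 i"
  define K0 where "K0 = induced_kernel m A P pi_t i"
  define o1 where "o1 = occ S layer s1 (A i) K1 mu"
  define o0 where "o0 = occ S layer s1 (A i) K0 mu"
  define D where "D = (\<Sum>j\<in>{..<m}-{i}. policy_dist S (A j) (pi_t1 j) (pi_t j))"
  have finS: "finite S" and s1S: "s1 \<in> S" and finA: "finite (A i)"
    using game i by (auto simp: layered_markov_game_def)
  have mu_nn: "0 \<le> mu s a" if "s \<in> S" "a \<in> A i" for s a using mu that by (auto simp: is_policy_def)
  have mu_sum: "(\<Sum>a\<in>A i. mu s a) = 1" if "s \<in> S" for s using mu that by (auto simp: is_policy_def)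
  have K1_sum: "(\<Sum>s'\<in>S. K1 s a s') = 1" and K1_nn: "0 \<le> K1 s a s'"
    if "s \<in> S" "layer s \<le> H" "a \<in> A i" for s a s'
    unfolding K1_def using kernel_facts[OF game pol_t1 i that] by auto
  have K0_sum: "(\<Sum>s'\<in>S. K0 s a s') = 1" and K0_nn: "0 \<le> K0 s a s'"
    if "s \<in> S" "layer s \<le> H" "a \<in> A i" for s a s'
    unfolding K0_def using kernel_facts[OF game pol_t i that] by auto
  have Kd: "(\<Sum>s'\<in>S. \<bar>K1 s a s' - K0 s a s'\<bar>) \<le> D"
    if "s \<in> S" "layer s \<le> H" "a \<in> A i" for s a
    unfolding K1_def K0_def D_def using kernel_diff[OF game pol_t1 pol_t i that] .
  have Dnn: "0 \<le> D"
    unfolding D_def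
  proof (intro sum_nonneg)
    fix j assume "j \<in> {..<m}-{i}"
    have "0 \<le> (\<Sum>a\<in>A j. \<bar>pi_t1 j s1 a - pi_t j s1 a\<bar>)" by (intro sum_nonneg) auto
    also have "\<dots> \<le> policy_dist S (A j) (pi_t1 j) (pi_t j)"
      unfolding policy_dist_def using finS s1S by (intro Max_ge) auto
    finally show "0 \<le> policy_dist S (A j) (pi_t1 j) (pi_t j)" .
  qed
  have main: "(\<forall>s. 0 \<le> o0 h s) \<and> (\<Sum>s\<in>S. o0 h s) \<le> 1 \<and> (\<Sum>s\<in>S. \<bar>o1 h s - o0 h s\<bar>) \<le> real h * D"
    if "h \<le> H" for h
    using that
  proof (induction h)
    case 0
    have "(\<Sum>s\<in>S. o0 0 s) = 1" unfolding o0_def using finS s1S by simp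
    then show ?case unfolding o0_def o1_def by simp
  next
    case (Suc h)
    define L where "L = {s\<in>S. layer s = Suc h}"
    have LS: "L \<subseteq> S" and finL: "finite L" using finS unfolding L_def by auto
    have Lh: "s \<in> S" "layer s \<le> H" if "s \<in> L" for s using that Suc.prems unfolding L_def by auto
    from Suc.IH Suc.prems have nn: "\<forall>s. 0 \<le> o0 h s" and ms: "(\<Sum>s\<in>S. o0 h s) \<le> 1"
      and ds: "(\<Sum>s\<in>S. \<bar>o1 h s - o0 h s\<bar>) \<le> real h * D" by auto
    have o0S: "o0 (Suc h) s' = (\<Sum>s\<in>L. \<Sum>a\<in>A i. o0 h s * mu s a * K0 s a s')" for s'
      unfolding o0_def L_def by simp
    have o1S: "o1 (Suc h) s' = (\<Sum>s\<in>L. \<Sum>a\<in>A i. o1 h s * mu s a * K1 s a s')" for s'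
      unfolding o1_def L_def by simp
    have nn': "\<forall>s'. 0 \<le> o0 (Suc h) s'"
      unfolding o0S using nn mu_nn K0_nn Lh
      by (intro allI sum_nonneg mult_nonneg_nonneg) auto
    have "(\<Sum>s'\<in>S. o0 (Suc h) s') = (\<Sum>s\<in>L. \<Sum>a\<in>A i. o0 h s * mu s a * (\<Sum>s'\<in>S. K0 s a s'))"
      unfolding o0S by (simp add: sum.swap[of _ S] sum_distrib_left)
    also have "\<dots> = (\<Sum>s\<in>L. o0 h s * (\<Sum>a\<in>A i. mu s a))"
      using K0_sum Lh by (intro sum.cong) (auto simp: sum_distrib_left)
    also have "\<dots> = (\<Sum>s\<in>L. o0 h s)" using mu_sum Lh by (intro sum.cong) auto
    also have "\<dots> \<le> (\<Sum>s\<in>S. o0 h s)" using LS finS nn by (intro sum_mono2) auto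
    finally have ms': "(\<Sum>s'\<in>S. o0 (Suc h) s') \<le> 1" using ms by simp
    have "(\<Sum>s'\<in>S. \<bar>o1 (Suc h) s' - o0 (Suc h) s'\<bar>)
        = (\<Sum>s'\<in>S. \<bar>\<Sum>s\<in>L. \<Sum>a\<in>A i. o1 h s * mu s a * K1 s a s' - o0 h s * mu s a * K0 s a s'\<bar>)"
      unfolding o0S o1S by (simp add: sum_subtractf)
    also have "\<dots> \<le> (\<Sum>s'\<in>S. \<Sum>s\<in>L. \<Sum>a\<in>A i.
          mu s a * \<bar>o1 h s - o0 h s\<bar> * K1 s a s' + o0 h s * mu s a * \<bar>K1 s a s' - K0 s a s'\<bar>)"
    proof (intro sum_mono order.trans[OF sum_abs])
      fix s' s a assume s: "s \<in> L" and a: "a \<in> A i"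
      have e: "o1 h s * mu s a * K1 s a s' - o0 h s * mu s a * K0 s a s'
           = mu s a * (o1 h s - o0 h s) * K1 s a s' + o0 h s * mu s a * (K1 s a s' - K0 s a s')"
        by (simp add: algebra_simps)
      have m0: "0 \<le> mu s a" using mu_nn Lh s a by auto
      have k0: "0 \<le> K1 s a s'" using K1_nn Lh s a by auto
      have q0: "0 \<le> o0 h s" using nn by auto
      show "\<bar>o1 h s * mu s a * K1 s a s' - o0 h s * mu s a * K0 s a s'\<bar>
          \<le> mu s a * \<bar>o1 h s - o0 h s\<bar> * K1 s a s' + o0 h s * mu s a * \<bar>K1 s a s' - K0 s a s'\<bar>"
        unfolding e using abs_triangle_ineq[of "mu s a * (o1 h s - o0 h s) * K1 s a s'"
            "o0 h s * mu s a * (K1 s a s' - K0 s a s')"] m0 k0 q0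
        by (simp add: abs_mult)
    qed
    also have "\<dots> = (\<Sum>s\<in>L. \<Sum>a\<in>A i.
          mu s a * \<bar>o1 h s - o0 h s\<bar> * (\<Sum>s'\<in>S. K1 s a s') + o0 h s * mu s a * (\<Sum>s'\<in>S. \<bar>K1 s a s' - K0 s a s'\<bar>))"
      apply (rule trans[OF sum.swap]) apply (rule sum.cong[OF refl]) apply (rule trans[OF sum.swap]) apply (rule sum.cong[OF refl])
      by (simp add: sum.distrib sum_distrib_left)
    also have "\<dots> \<le> (\<Sum>s\<in>L. \<Sum>a\<in>A i. mu s a * \<bar>o1 h s - o0 h s\<bar> + o0 h s * mu s a * D)"
    proof (intro sum_mono)
      fix s a assume s: "s \<in> L" and a: "a \<in> A i"
      have "0 \<le> o0 h s * mu s a" using nn mu_nn Lh s a by auto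
      then show "mu s a * \<bar>o1 h s - o0 h s\<bar> * (\<Sum>s'\<in>S. K1 s a s') + o0 h s * mu s a * (\<Sum>s'\<in>S. \<bar>K1 s a s' - K0 s a s'\<bar>)
           \<le> mu s a * \<bar>o1 h s - o0 h s\<bar> + o0 h s * mu s a * D"
        using K1_sum[OF Lh[OF s] a] Kd[OF Lh[OF s] a] by (simp add: mult_left_mono)
    qed
    also have "\<dots> = (\<Sum>s\<in>L. \<bar>o1 h s - o0 h s\<bar> + D * o0 h s)"
    proof (intro sum.cong refl)
      fix s assume s: "s \<in> L"
      have "(\<Sum>a\<in>A i. mu s a * \<bar>o1 h s - o0 h s\<bar> + o0 h s * mu s a * D)
          = (\<Sum>a\<in>A i. mu s a) * \<bar>o1 h s - o0 h s\<bar> + D * o0 h s * (\<Sum>a\<in>A i. mu s a)"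
        by (simp add: sum.distrib sum_distrib_left sum_distrib_right algebra_simps)
      then show "(\<Sum>a\<in>A i. mu s a * \<bar>o1 h s - o0 h s\<bar> + o0 h s * mu s a * D) = \<bar>o1 h s - o0 h s\<bar> + D * o0 h s"
        using mu_sum Lh[OF s] by simp
    qed
    also have "\<dots> \<le> (\<Sum>s\<in>S. \<bar>o1 h s - o0 h s\<bar> + D * o0 h s)"
      using LS finS nn Dnn by (intro sum_mono2) auto
    also have "\<dots> = (\<Sum>s\<in>S. \<bar>o1 h s - o0 h s\<bar>) + D * (\<Sum>s\<in>S. o0 h s)"
      by (simp add: sum.distrib sum_distrib_left)
    also have "\<dots> \<le> real h * D + D * 1"
      using ds ms Dnn by (intro add_mono mult_left_mono) auto
    also have "\<dots> = real (Suc h) * D" by (simp add: algebra_simps)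
    finally show ?case using nn' ms' by blast
  qed
  show ?thesis
    unfolding sup_dist_def D_def[symmetric]
  proof (subst Max_le_iff)
    show "finite ((\<lambda>s. \<bar>occupancy S layer s1 (A i) (induced_kernel m A P pi_t1 i) mu s -
              occupancy S layer s1 (A i) (induced_kernel m A P pi_t i) mu s\<bar>) ` S)" using finS by simp
    show "(\<lambda>s. \<bar>occupancy S layer s1 (A i) (induced_kernel m A P pi_t1 i) mu s -
              occupancy S layer s1 (A i) (induced_kernel m A P pi_t i) mu s\<bar>) ` S \<noteq> {}" using s1S by auto
    show "\<forall>x\<in>(\<lambda>s. \<bar>occupancy S layer s1 (A i) (induced_kernel m A P pi_t1 i) mu s -
              occupancy S layer s1 (A i) (induced_kernel m A P pi_t i) mu s\<bar>) ` S. x \<le> (real H)\<^sup>2 * D"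
    proof
      fix x assume "x \<in> (\<lambda>s. \<bar>occupancy S layer s1 (A i) (induced_kernel m A P pi_t1 i) mu s -
              occupancy S layer s1 (A i) (induced_kernel m A P pi_t i) mu s\<bar>) ` S"
      then obtain s where s: "s \<in> S" and x: "x = \<bar>o1 (layer s - 1) s - o0 (layer s - 1) s\<bar>"
        unfolding occupancy_def o1_def o0_def K1_def K0_def by auto
      define h where "h = layer s - 1"
      have hH: "h \<le> H"
      proof -
        have "layer s \<le> Suc H" using game s unfolding layered_markov_game_def by blast
        then show ?thesis unfolding h_def by simp
      qed
      have "x \<le> (\<Sum>s\<in>S. \<bar>o1 h s - o0 h s\<bar>)"
        unfolding x h_def[symmetric] using finS s by (intro member_le_sum) auto
      also have "\<dots> \<le> real h * D" using main[OF hH] by blast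
      also have "\<dots> \<le> real H * D" using hH Dnn by (intro mult_right_mono) auto
      also have "\<dots> \<le> (real H)\<^sup>2 * D"
      proof (cases "H = 0")
        case False
        then have "real H \<le> (real H)^2" by (simp add: power2_eq_square)
        then show ?thesis using Dnn by (intro mult_right_mono) auto
      qed simp
      finally show "x \<le> (real H)\<^sup>2 * D" .
    qed
  qed
qed

end
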